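(* Let $d,a_1,\ldots,a_n$ be positive integers and $c_1,\ldots,c_n\ge 0$ integers. Then the ideal $x_1^{c_1}\cdots x_n^{c_n}I_{(d;a_1,\ldots,a_n)}$ can be extended by linear quotients to $I_{(d+\sum_{i=1}^nc_i;\,a_1+c_1,\ldots,a_n+c_n)}$.
   Context: $S=K[x_1,\ldots,x_n]$, $G(I)$ = minimal monomial generating set. For positive integers $d,a_1,\dots,a_n$, $I_{(d;a_1,\ldots,a_n)}\subset S$ is the monomial ideal generated by all monomials $u$ of degree $d$ with $\deg_{x_i}(u)\le a_i$ for all $i$ (ideal of Veronese type). For monomial ideals $I\subseteq J$ with $G(I)\subseteq G(J)$, $I$ can be extended by linear quotients to $J$ if $G(J)\setminus G(I)$ can be ordered $v_1,\ldots,v_m$ such that for each $i=0,\ldots,m-1$ the colon ideal $(G(I),v_1,\ldots,v_i):v_{i+1}$ is generated by variables. *)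

theory Defs
  imports Main
begin

(* Monomials in S = K[x_1,...,x_n] are represented by exponent vectors
   u :: nat => nat, where u (i-1) is the exponent of x_i; a monomial of S
   has u i = 0 for all i >= n.  Multiplication of monomials is addition of
   exponent vectors, divisibility is the pointwise order. *)

definition is_mono :: "nat \<Rightarrow> (nat \<Rightarrow> nat) \<Rightarrow> bool" where
  "is_mono n u \<longleftrightarrow> (\<forall>i\<ge>n. u i = 0)"

definition mdvd :: "(nat \<Rightarrow> nat) \<Rightarrow> (nat \<Rightarrow> nat) \<Rightarrow> bool" where
  "mdvd u w \<longleftrightarrow> (\<forall>i. u i \<le> w i)"

definition mdeg :: "nat \<Rightarrow> (nat \<Rightarrow> nat) \<Rightarrow> nat" where
  "mdeg n u = (\<Sum>i<n. u i)"

definition in_mideal :: "(nat \<Rightarrow> nat) set \<Rightarrow> (nat \<Rightarrow> nat) \<Rightarrow> bool" where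
  "in_mideal G w \<longleftrightarrow> (\<exists>g\<in>G. mdvd g w)"

definition mingens :: "(nat \<Rightarrow> nat) set \<Rightarrow> (nat \<Rightarrow> nat) set" where
  "mingens G = {g\<in>G. \<not> (\<exists>h\<in>G. h \<noteq> g \<and> mdvd h g)}"

definition veronese_gens :: "nat \<Rightarrow> nat \<Rightarrow> (nat \<Rightarrow> nat) \<Rightarrow> (nat \<Rightarrow> nat) set" where
  "veronese_gens n d a = {u. is_mono n u \<and> mdeg n u = d \<and> (\<forall>i<n. u i \<le> a i)}"

(* The monomial ideal (G) : v is generated by variables: there is a set S of
   variables such that a monomial w of S lies in (G):v  (i.e. w*v lies in (G))
   iff some x_j with j in S divides w.  (Monomial ideals are determined by the
   monomials they contain.) *)
definition colon_gen_by_vars :: "nat \<Rightarrow> (nat \<Rightarrow> nat) set \<Rightarrow> (nat \<Rightarrow> nat) \<Rightarrow> bool" where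
  "colon_gen_by_vars n G v \<longleftrightarrow>
     (\<exists>S\<subseteq>{..<n}. \<forall>w. is_mono n w \<longrightarrow>
        (in_mideal G (\<lambda>i. w i + v i) \<longleftrightarrow> (\<exists>j\<in>S. 0 < w j)))"

(* I (with minimal generating set GI) can be extended by linear quotients to
   J (with minimal generating set GJ). *)
definition ext_lin_quot :: "nat \<Rightarrow> (nat \<Rightarrow> nat) set \<Rightarrow> (nat \<Rightarrow> nat) set \<Rightarrow> bool" where
  "ext_lin_quot n GI GJ \<longleftrightarrow> GI \<subseteq> GJ \<and>
     (\<exists>vs. distinct vs \<and> set vs = GJ - GI \<and>
        (\<forall>i<length vs. colon_gen_by_vars n (GI \<union> set (take i vs)) (vs ! i)))"

end

theory Submission
  imports Defs "HOL-Library.FuncSet"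
begin

definition lexgt :: "(nat \<Rightarrow> nat) \<Rightarrow> (nat \<Rightarrow> nat) \<Rightarrow> bool" where
  "lexgt u v \<longleftrightarrow> (\<exists>t. v t < u t \<and> (\<forall>i<t. u i = v i))"

lemma lexgt_irrefl: "\<not> lexgt u u" by (auto simp: lexgt_def)

lemma lexgt_trans: assumes "lexgt u v" "lexgt v w" shows "lexgt u w"
proof -
  obtain t1 where t1: "v t1 < u t1" "\<forall>i<t1. u i = v i" using assms(1) lexgt_def by auto
  obtain t2 where t2: "w t2 < v t2" "\<forall>i<t2. v i = w i" using assms(2) lexgt_def by auto
  show ?thesis unfolding lexgt_def
  proof (cases t1 t2 rule: linorder_cases)
    case less then show "\<exists>t. w t < u t \<and> (\<forall>i<t. u i = w i)" using t1 t2
      by (intro exI[of _ t1]) auto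
  next
    case equal then show "\<exists>t. w t < u t \<and> (\<forall>i<t. u i = w i)" using t1 t2
      by (intro exI[of _ t1]) auto
  next
    case greater then show "\<exists>t. w t < u t \<and> (\<forall>i<t. u i = w i)" using t1 t2
      by (intro exI[of _ t2]) auto
  qed
qed

lemma lexgt_total: assumes "u \<noteq> v" shows "lexgt u v \<or> lexgt v u"
proof -
  obtain i where i: "u i \<noteq> v i" using assms by auto
  define t where "t = (LEAST i. u i \<noteq> v i)"
  have ut: "u t \<noteq> v t" using LeastI[of "\<lambda>i. u i \<noteq> v i", OF i] t_def by simp
  have eq: "\<forall>i<t. u i = v i" using not_less_Least t_def by blast
  show ?thesis
  proof (cases "u t < v t")
    case True then have "lexgt v u" unfolding lexgt_def using eq by (intro exI[of _ t]) auto
    then show ?thesis by simp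
  next
    case False then have "v t < u t" using ut by simp
    then have "lexgt u v" unfolding lexgt_def using eq by (intro exI[of _ t]) auto
    then show ?thesis by simp
  qed
qed

lemma sorted_exists:
  assumes "finite X" "\<And>x. \<not> R x x" "\<And>x y z. R x y \<Longrightarrow> R y z \<Longrightarrow> R x z"
    "\<And>x y. x \<in> X \<Longrightarrow> y \<in> X \<Longrightarrow> x \<noteq> y \<Longrightarrow> R x y \<or> R y x"
  shows "\<exists>xs. distinct xs \<and> set xs = X \<and> sorted_wrt R xs"
  using assms(1,4)
proof (induction X rule: finite_induct)
  case empty then show ?case by auto
next
  case (insert x F)
  then obtain xs where xs: "distinct xs" "set xs = F" "sorted_wrt R xs" by blast
  define ys where "ys = filter (\<lambda>y. R y x) xs @ [x] @ filter (\<lambda>y. R x y) xs"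
  have "distinct ys" unfolding ys_def using xs insert.hyps assms(2,3) by auto
  moreover have "set ys = insert x F" unfolding ys_def using xs insert.hyps insert.prems
    by auto
  moreover have "sorted_wrt R ys" unfolding ys_def using xs assms(3)
    by (auto simp: sorted_wrt_append sorted_wrt_filter)
  ultimately show ?case by blast
qed

definition dl :: "nat \<Rightarrow> (nat \<Rightarrow> nat) \<Rightarrow> (nat \<Rightarrow> nat) \<Rightarrow> nat" where
  "dl n c u = (\<Sum>i<n. c i - u i)"

definition prec :: "nat \<Rightarrow> (nat \<Rightarrow> nat) \<Rightarrow> (nat \<Rightarrow> nat) \<Rightarrow> (nat \<Rightarrow> nat) \<Rightarrow> bool" where
  "prec n c u v \<longleftrightarrow> dl n c u < dl n c v \<or> (dl n c u = dl n c v \<and> lexgt u v)"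

lemma prec_irrefl: "\<not> prec n c u u" by (auto simp: prec_def lexgt_irrefl)

lemma prec_trans: "prec n c u v \<Longrightarrow> prec n c v w \<Longrightarrow> prec n c u w"
  unfolding prec_def using lexgt_trans by auto

lemma prec_total: "u \<noteq> v \<Longrightarrow> prec n c u v \<or> prec n c v u"
  unfolding prec_def using lexgt_total[of u v] by (cases "dl n c u" "dl n c v" rule: linorder_cases) auto

definition upd :: "(nat \<Rightarrow> nat) \<Rightarrow> nat \<Rightarrow> nat \<Rightarrow> nat \<Rightarrow> nat" where
  "upd v j k = (\<lambda>i. if i = j then v i + 1 else if i = k then v i - 1 else v i)"

lemma mono_pos_lt: "is_mono n u \<Longrightarrow> 0 < u i \<Longrightarrow> i < n"
  unfolding is_mono_def by (metis not_le less_irrefl)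

lemma exchange:
  assumes gm: "is_mono n g" and vm: "is_mono n v"
    and sg: "(\<Sum>i<n. g i) = (\<Sum>i<n. v i)" and p: "prec n c g v"
  shows "\<exists>j k. j < n \<and> k < n \<and> v j < g j \<and> g k < v k \<and> prec n c (upd v j k) v"
  using p[unfolded prec_def]
proof (elim disjE conjE)
  assume lt: "dl n c g < dl n c v"
  have "\<exists>j. v j < g j \<and> v j < c j"
  proof (rule ccontr)
    assume NT: "\<not> ?thesis"
    then have "\<And>i. c i - v i \<le> c i - g i"
    proof -
      fix i have "\<not> (v i < g i \<and> v i < c i)" using NT by blast
      then show "c i - v i \<le> c i - g i" by arith
    qed
    then have "dl n c v \<le> dl n c g" unfolding dl_def by (intro sum_mono) auto
    then show False using lt by simp
  qed
  then obtain j where j: "v j < g j" "v j < c j" by blast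
  have "\<exists>k. g k < v k \<and> c k < v k"
  proof (rule ccontr)
    assume NT: "\<not> ?thesis"
    then have "\<And>i. (c i - v i) + v i \<le> (c i - g i) + g i"
    proof -
      fix i have "\<not> (g i < v i \<and> c i < v i)" using NT by blast
      then show "(c i - v i) + v i \<le> (c i - g i) + g i" by arith
    qed
    then have "(\<Sum>i<n. (c i - v i) + v i) \<le> (\<Sum>i<n. (c i - g i) + g i)" by (intro sum_mono) auto
    then have "dl n c v \<le> dl n c g" unfolding dl_def sum.distrib using sg by simp
    then show False using lt by simp
  qed
  then obtain k where k: "g k < v k" "c k < v k" by blast
  have jn: "j < n" using mono_pos_lt[OF gm] j by simp
  have kn: "k < n" using mono_pos_lt[OF vm] k by simp
  have jk: "j \<noteq> k" using j k by auto
  have "dl n c (upd v j k) < dl n c v" unfolding dl_def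
  proof (rule sum_strict_mono_ex1)
    show "\<forall>i\<in>{..<n}. c i - upd v j k i \<le> c i - v i" using k jk by (auto simp: upd_def)
    show "\<exists>i\<in>{..<n}. c i - upd v j k i < c i - v i" using j jk jn
      by (intro bexI[of _ j]) (auto simp: upd_def)
  qed simp
  then show ?thesis using jn kn j k unfolding prec_def by blast
next
  assume eq: "dl n c g = dl n c v" and lg: "lexgt g v"
  then obtain t where t: "v t < g t" "\<forall>i<t. g i = v i" unfolding lexgt_def by blast
  have tn: "t < n" using mono_pos_lt[OF gm] t by simp
  have N: "\<exists>k. g k < v k"
  proof (rule ccontr)
    assume "\<not> ?thesis"
    then have "(\<Sum>i<n. v i) < (\<Sum>i<n. g i)" using tn t
      by (intro sum_strict_mono_ex1) (auto simp: not_less intro!: bexI[of _ t])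
    then show False using sg by simp
  qed
  have "\<exists>k. g k < v k \<and> (c k < v k \<or> v t < c t)"
  proof (rule ccontr)
    assume NT: "\<not> ?thesis"
    then have A: "\<forall>i. g i < v i \<longrightarrow> v i \<le> c i" and B: "c t \<le> v t" using N by auto
    have "(\<Sum>i<n. (c i - v i) + v i) < (\<Sum>i<n. (c i - g i) + g i)"
    proof (rule sum_strict_mono_ex1)
      show "\<forall>i\<in>{..<n}. (c i - v i) + v i \<le> (c i - g i) + g i"
      proof
        fix i assume "i \<in> {..<n}"
        show "(c i - v i) + v i \<le> (c i - g i) + g i"
        proof (cases "g i < v i")
          case True then show ?thesis using A by auto
        next
          case False then show ?thesis by auto
        qed
      qed
      show "\<exists>i\<in>{..<n}. (c i - v i) + v i < (c i - g i) + g i"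
        using tn t B by (intro bexI[of _ t]) auto
    qed simp
    then have "dl n c v < dl n c g" unfolding dl_def sum.distrib using sg by simp
    then show False using eq by simp
  qed
  then obtain k where k: "g k < v k" "c k < v k \<or> v t < c t" by blast
  have kn: "k < n" using mono_pos_lt[OF vm] k by simp
  have kt: "t < k"
  proof -
    have "k \<noteq> t" using k(1) t(1) by auto
    moreover have "\<not> k < t" using k(1) t(2) by auto
    ultimately show ?thesis by arith
  qed
  have le: "dl n c (upd v t k) \<le> dl n c v"
  proof (cases "c k < v k")
    case True
    have "\<forall>i\<in>{..<n}. c i - upd v t k i \<le> c i - v i" using True kt by (auto simp: upd_def)
    then show ?thesis unfolding dl_def by (intro sum_mono) auto
  next
    case False
    then have vt: "v t < c t" using k by simp
    have "\<forall>i\<in>{..<n}. (c i - upd v t k i) + (if i = t then 1 else 0)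
              \<le> (c i - v i) + (if i = k then 1 else 0)"
      using vt kt by (auto simp: upd_def)
    then have "(\<Sum>i<n. (c i - upd v t k i) + (if i = t then 1 else 0))
              \<le> (\<Sum>i<n. (c i - v i) + (if i = k then 1 else 0))" by (intro sum_mono) auto
    then show ?thesis unfolding dl_def sum.distrib using tn kn by simp
  qed
  have "lexgt (upd v t k) v" unfolding lexgt_def using kt
    by (intro exI[of _ t]) (auto simp: upd_def)
  then have "prec n c (upd v t k) v" using le unfolding prec_def by auto
  then show ?thesis using tn kn t(1) k(1) by (intro exI[of _ t] exI[of _ k]) simp
qed

lemma upd_in:
  assumes v: "v \<in> veronese_gens n D b" and g: "g \<in> veronese_gens n D b"
    and jn: "j < n" and kn: "k < n" and j: "v j < g j" and k: "g k < v k"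
  shows "upd v j k \<in> veronese_gens n D b"
proof -
  have jk: "j \<noteq> k" using j k by auto
  have vm: "is_mono n v" and vd: "mdeg n v = D" and vb: "\<forall>i<n. v i \<le> b i"
    using v by (auto simp: veronese_gens_def)
  have gb: "\<forall>i<n. g i \<le> b i" using g by (auto simp: veronese_gens_def)
  have m: "is_mono n (upd v j k)" using vm jn kn unfolding is_mono_def upd_def by auto
  have "\<forall>i\<in>{..<n}. upd v j k i + (if i = k then 1 else 0) = v i + (if i = j then 1 else 0)"
    using k jk by (auto simp: upd_def)
  then have "(\<Sum>i<n. upd v j k i + (if i = k then 1 else 0)) = (\<Sum>i<n. v i + (if i = j then 1 else 0))"
    by (intro sum.cong) auto
  then have "mdeg n (upd v j k) = D" using vd jn kn unfolding mdeg_def sum.distrib by simp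
  moreover have "\<forall>i<n. upd v j k i \<le> b i"
  proof -
    have "v j + 1 \<le> b j" using gb[rule_format, OF jn] j by arith
    then show ?thesis using vb unfolding upd_def by auto
  qed
  ultimately show ?thesis using m by (simp add: veronese_gens_def)
qed

lemma colon_ok:
  assumes GJ: "GJ = veronese_gens n D b"
    and sub: "G \<subseteq> GJ" and before: "\<forall>g\<in>G. prec n c g v"
    and closed: "\<forall>u\<in>GJ. prec n c u v \<longrightarrow> u \<in> G" and v: "v \<in> GJ"
  shows "colon_gen_by_vars n G v"
  unfolding colon_gen_by_vars_def
proof (intro exI conjI allI impI)
  define S where "S = {j. j < n \<and> (\<exists>g\<in>G. mdvd g (\<lambda>i. v i + (if i = j then 1 else 0)))}"
  show "S \<subseteq> {..<n}" unfolding S_def by auto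
  fix w :: "nat \<Rightarrow> nat" assume wm: "is_mono n w"
  show "in_mideal G (\<lambda>i. w i + v i) = (\<exists>j\<in>S. 0 < w j)"
  proof
    assume "in_mideal G (\<lambda>i. w i + v i)"
    then obtain g where g: "g \<in> G" "mdvd g (\<lambda>i. w i + v i)" unfolding in_mideal_def by blast
    have gJ: "g \<in> veronese_gens n D b" using g sub GJ by auto
    have vJ: "v \<in> veronese_gens n D b" using v GJ by auto
    have "\<exists>j k. j < n \<and> k < n \<and> v j < g j \<and> g k < v k \<and> prec n c (upd v j k) v"
      using gJ vJ before g by (intro exchange) (auto simp: veronese_gens_def mdeg_def)
    then obtain j k where jk: "j < n" "k < n" "v j < g j" "g k < v k" "prec n c (upd v j k) v"
      by blast
    have "upd v j k \<in> GJ" using upd_in[OF vJ gJ jk(1-4)] GJ by simp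
    then have uG: "upd v j k \<in> G" using closed jk(5) by blast
    have "mdvd (upd v j k) (\<lambda>i. v i + (if i = j then 1 else 0))"
      unfolding mdvd_def upd_def by auto
    then have "j \<in> S" unfolding S_def using uG jk by blast
    moreover have "g j \<le> w j + v j" using g(2) unfolding mdvd_def by auto
    then have "0 < w j" using jk(3) by arith
    ultimately show "\<exists>j\<in>S. 0 < w j" by blast
  next
    assume "\<exists>j\<in>S. 0 < w j"
    then obtain j g where jg: "0 < w j" "g \<in> G" "mdvd g (\<lambda>i. v i + (if i = j then 1 else 0))"
      unfolding S_def by blast
    have "g i \<le> w i + v i" for i
    proof -
      have "g i \<le> v i + (if i = j then 1 else 0)" using jg(3) unfolding mdvd_def by blast
      then show ?thesis using jg(1) by (cases "i = j") auto
    qed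
    then show "in_mideal G (\<lambda>i. w i + v i)" unfolding in_mideal_def mdvd_def using jg(2) by blast
  qed
qed

lemma mingens_same:
  assumes "\<forall>u\<in>X. is_mono n u \<and> mdeg n u = e"
  shows "mingens X = X"
proof -
  have "\<not> (\<exists>h\<in>X. h \<noteq> g \<and> mdvd h g)" if g: "g \<in> X" for g
  proof
    assume "\<exists>h\<in>X. h \<noteq> g \<and> mdvd h g"
    then obtain h where h: "h \<in> X" "h \<noteq> g" "mdvd h g" by blast
    have hm: "is_mono n h" "mdeg n h = e" and gm: "is_mono n g" "mdeg n g = e"
      using assms h g by auto
    obtain i where i: "h i \<noteq> g i" using h by auto
    then have "i < n" using hm gm unfolding is_mono_def by (metis not_le)
    then have "(\<Sum>i<n. h i) < (\<Sum>i<n. g i)"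
      using h(3) i by (intro sum_strict_mono_ex1) (auto simp: mdvd_def le_neq_implies_less intro!: bexI[of _ i])
    then show False using hm gm unfolding mdeg_def by simp
  qed
  then show ?thesis unfolding mingens_def by auto
qed

lemma fin_ver: "finite (veronese_gens n D b)"
proof -
  let ?f = "\<lambda>u. restrict u {..<n}"
  have "inj_on ?f (veronese_gens n D b)"
  proof (rule inj_onI)
    fix u v assume "u \<in> veronese_gens n D b" "v \<in> veronese_gens n D b" "?f u = ?f v"
    then show "u = v"
    proof (intro ext)
      fix i
      assume a: "u \<in> veronese_gens n D b" "v \<in> veronese_gens n D b" "?f u = ?f v"
      show "u i = v i"
      proof (cases "i < n")
        case True then show ?thesis using fun_cong[OF a(3), of i] by simp
      next
        case False then show ?thesis using a(1,2) by (simp add: veronese_gens_def is_mono_def)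
      qed
    qed
  qed
  moreover have "?f ` veronese_gens n D b \<subseteq> (\<Pi>\<^sub>E i\<in>{..<n}. {..b i})"
  proof (rule image_subsetI)
    fix u assume "u \<in> veronese_gens n D b"
    then show "restrict u {..<n} \<in> (\<Pi>\<^sub>E i\<in>{..<n}. {..b i})"
      by (intro restrict_PiE_iff[THEN iffD2]) (auto simp: veronese_gens_def)
  qed
  moreover have "finite (\<Pi>\<^sub>E i\<in>{..<n}. {..b i})" by (intro finite_PiE) auto
  ultimately show ?thesis by (metis finite_imageD finite_subset)
qed

theorem lemma3p6:
  fixes n d :: nat and a c :: "nat \<Rightarrow> nat"
  assumes "0 < d"
    and "\<forall>i<n. 0 < a i"
    and "is_mono n c"
  shows "ext_lin_quot n
           (mingens ((\<lambda>u i. c i + u i) ` veronese_gens n d a))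
           (mingens (veronese_gens n (d + (\<Sum>i<n. c i)) (\<lambda>i. a i + c i)))"
proof -
  define GJ where "GJ = veronese_gens n (d + (\<Sum>i<n. c i)) (\<lambda>i. a i + c i)"
  define GI where "GI = (\<lambda>u i. c i + u i) ` veronese_gens n d a"
  have cm: "is_mono n c" by fact
  have GI_sub: "GI \<subseteq> GJ"
  proof
    fix x assume "x \<in> GI"
    then obtain u where u: "u \<in> veronese_gens n d a" "x = (\<lambda>i. c i + u i)" unfolding GI_def by blast
    then show "x \<in> GJ" using cm unfolding GJ_def veronese_gens_def is_mono_def mdeg_def
      by (auto simp: sum.distrib)
  qed
  have mJ: "mingens GJ = GJ" unfolding GJ_def by (rule mingens_same) (auto simp: veronese_gens_def)
  have mI: "mingens GI = GI" using GI_sub unfolding GJ_def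
    by (intro mingens_same) (auto simp: veronese_gens_def)
  have GI_d: "\<forall>u\<in>GI. dl n c u = 0" unfolding GI_def dl_def by auto
  have d0: "u \<in> GI" if u: "u \<in> GJ" "dl n c u = 0" for u
  proof -
    have ge: "\<forall>i<n. c i \<le> u i" using u(2) unfolding dl_def by simp
    have um: "is_mono n u" and ud: "(\<Sum>i<n. u i) = d + (\<Sum>i<n. c i)"
      and ub: "\<forall>i<n. u i \<le> a i + c i"
      using u(1) unfolding GJ_def veronese_gens_def mdeg_def by auto
    define w where "w = (\<lambda>i. u i - c i)"
    have "(\<Sum>i<n. w i + c i) = (\<Sum>i<n. u i)" using ge unfolding w_def by (intro sum.cong) auto
    then have "mdeg n w = d" using ud unfolding mdeg_def sum.distrib by simp
    moreover have "is_mono n w" using um unfolding is_mono_def w_def by auto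
    moreover have "\<forall>i<n. w i \<le> a i" using ub unfolding w_def by auto
    ultimately have "w \<in> veronese_gens n d a" unfolding veronese_gens_def by auto
    moreover have "u = (\<lambda>i. c i + w i)"
    proof
      fix i show "u i = c i + w i"
      proof (cases "i < n")
        case True then show ?thesis using ge unfolding w_def by auto
      next
        case False then show ?thesis using um cm unfolding w_def is_mono_def by auto
      qed
    qed
    ultimately show ?thesis unfolding GI_def by blast
  qed
  have "finite (GJ - GI)" using fin_ver unfolding GJ_def by auto
  then obtain vs where vs: "distinct vs" "set vs = GJ - GI" "sorted_wrt (prec n c) vs"
  proof -
    have "\<exists>xs. distinct xs \<and> set xs = GJ - GI \<and> sorted_wrt (prec n c) xs"
    proof (rule sorted_exists)
      show "finite (GJ - GI)" by fact
      show "\<And>x. \<not> prec n c x x" by (rule prec_irrefl)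
      show "\<And>x y z. prec n c x y \<Longrightarrow> prec n c y z \<Longrightarrow> prec n c x z" by (rule prec_trans)
      show "\<And>x y. x \<noteq> y \<Longrightarrow> prec n c x y \<or> prec n c y x" by (rule prec_total)
    qed
    then show ?thesis using that by blast
  qed
  have "colon_gen_by_vars n (GI \<union> set (take i vs)) (vs ! i)" if i: "i < length vs" for i
  proof (rule colon_ok[OF GJ_def])
    have "vs ! i \<in> set vs" using i by simp
    then have vJ: "vs ! i \<in> GJ" "vs ! i \<notin> GI" using vs(2) by auto
    show "vs ! i \<in> GJ" by fact
    show "GI \<union> set (take i vs) \<subseteq> GJ" using GI_sub vs(2) set_take_subset[of i vs] by blast
    have "dl n c (vs ! i) \<noteq> 0" using vJ d0 by blast
    then have dpos: "0 < dl n c (vs ! i)" by simp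
    show "\<forall>g\<in>GI \<union> set (take i vs). prec n c g (vs ! i)"
    proof
      fix g assume "g \<in> GI \<union> set (take i vs)"
      then show "prec n c g (vs ! i)"
      proof
        assume "g \<in> GI" then show ?thesis using GI_d dpos unfolding prec_def by auto
      next
        assume "g \<in> set (take i vs)"
        then obtain m where m: "m < i" "g = vs ! m" using i
          by (auto simp: in_set_conv_nth)
        then show ?thesis using vs(3) i unfolding sorted_wrt_iff_nth_less by auto
      qed
    qed
    show "\<forall>u\<in>GJ. prec n c u (vs ! i) \<longrightarrow> u \<in> GI \<union> set (take i vs)"
    proof (intro ballI impI)
      fix u assume u: "u \<in> GJ" "prec n c u (vs ! i)"
      show "u \<in> GI \<union> set (take i vs)"
      proof (cases "u \<in> GI")
        case False
        then have "u \<in> set vs" using u vs(2) by auto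
        then obtain m where m: "m < length vs" "u = vs ! m" by (auto simp: in_set_conv_nth)
        consider "m < i" | "m = i" | "i < m" by arith
        then show ?thesis
        proof cases
          case 1 then have "u \<in> set (take i vs)" using m i
            by (auto simp: in_set_conv_nth intro!: exI[of _ m])
          then show ?thesis by simp
        next
          case 2 then have "prec n c (vs ! i) (vs ! i)" using u(2) m(2) by simp
          then show ?thesis by (simp add: prec_irrefl)
        next
          case 3 then have "prec n c (vs ! i) u" using vs(3) m unfolding sorted_wrt_iff_nth_less by auto
          then have "prec n c (vs ! i) (vs ! i)" by (rule prec_trans) (rule u(2))
          then show ?thesis by (simp add: prec_irrefl)
        qed
      qed simp
    qed
  qed
  then have "ext_lin_quot n GI GJ" unfolding ext_lin_quot_def
    using GI_sub vs(1,2) by (intro conjI exI[of _ vs]) auto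
  then show ?thesis unfolding GJ_def[symmetric] GI_def[symmetric] mJ mI .
qed

end
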